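(* Let $\mathrm{dist}$ be a distance measure and let $\Pi$ be an SSP-NP-complete problem such that \textsc{3Sat} is blow-up SSP reducible to $\Pi$ with respect to $\mathrm{dist}$. Then every SSP problem $\Pi'$ to which there is a blow-up preserving SSP reduction from $\Pi$ is such that \textsc{3Sat} is blow-up SSP reducible to $\Pi'$ with respect to $\mathrm{dist}$.
   Context: An SSP problem is $\Pi = (\mathcal{I}, \mathcal{U}, \mathcal{S})$ with instances $\mathcal{I} \subseteq \{0,1\}^*$, and for each $I$ a universe $\mathcal{U}(I)$ and solution set $\mathcal{S}(I) \subseteq 2^{\mathcal{U}(I)}$; $I$ is a yes-instance iff $\mathcal{S}(I)\ne\emptyset$. \textsc{Satisfiability} as SSP problem: instance = literal set $L = \{\ell_1,\dots,\ell_n,\overline{\ell}_1,\dots,\overline{\ell}_n\}$ and clauses $C_j \subseteq L$; universe $L$; solutions are the $L' \subseteq L$ with $|L'\cap\{\ell_i,\overline{\ell}_i\}|=1$ for all $i$ and $|L'\cap C_j| \ge 1$ for all $j$. \textsc{3Sat}: the same with every clause having three literals. An SSP reduction from $(\mathcal{I},\mathcal{U},\mathcal{S})$ to $(\mathcal{I}',\mathcal{U}',\mathcal{S}')$: polynomial-time $g$ with $\mathcal{S}(I)\ne\emptyset \iff \mathcal{S}'(g(I))\ne\emptyset$ and polynomial-time injective $f_I : \mathcal{U}(I)\to\mathcal{U}'(g(I))$ with $\{f_I(S): S\in\mathcal{S}(I)\} = \{S'\cap f_I(\mathcal{U}(I)) : S'\in\mathcal{S}'(g(I))\}$. A problem is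 SSP-NP-complete if its solutions are verifiable in polynomial time and there is an SSP reduction from \textsc{Satisfiability} to it. A blow-up preserving SSP reduction from $\Pi$ to $\Pi'$ is an SSP reduction $(g, f_I)$ such that for every instance $I$ and every $u' \in \mathcal{U}'(g(I))$, either $u' \in f_I(\mathcal{U}(I))$, or $u'$ lies in no solution $S' \in \mathcal{S}'(g(I))$, or $u'$ lies in every solution $S' \in \mathcal{S}'(g(I))$. A distance measure assigns to each set $U$ a polynomial-time computable $\mathrm{dist}_U : 2^U\times 2^U\to\mathbb{R}_{\ge0}$, invariant under injective maps ($\mathrm{dist}_U(A_1,A_2)=\mathrm{dist}_{U'}(f(A_1),f(A_2))$), invariant under union ($\mathrm{dist}_U(A_1,A_2)=\mathrm{dist}_U(A_1\cup\{x\},A_2\cup\{x\})$ for $x\notin A_1\cup A_2$), with $\mathrm{dist}_U(A,A)=0$. \textsc{3Sat} is blow-up SSP reducible to $\Pi'=(\mathcal{I}',\mathcal{U}',\mathcal{S}')$ with respect to $\mathrm{dist}$ if for every \textsc{3Sat} instance $I$ with literals $L$ and every $L_b\subseteq L$ with $\ell_i\in L_b\iff\overline{\ell}_i\in L_b$ there is an SSP reduction $(g,f_I)$ and a polynomial-time computable $\beta_I\in\mathbb{N}$ such that for all $S_1,S_2\in\mathcal{S}'(g(I))$: $f_I(L_b)\cap S_1 = f_I(L_b)\cap S_2 \iff \mathrm{dist}(S_1,S_2)\le\beta_I$. *)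

theory Defs
  imports Complex_Main
begin

definition enc_pair :: "bool list \<Rightarrow> bool list \<Rightarrow> bool list" where
  "enc_pair x y = concat (map (\<lambda>b. [b, b]) x) @ [True, False] @ y"

fun dec_pair :: "bool list \<Rightarrow> bool list \<times> bool list" where
  "dec_pair (a # b # r) =
     (if a = b then (case dec_pair r of (x, y) \<Rightarrow> (a # x, y)) else ([], r))"
| "dec_pair _ = ([], [])"

fun enc_list :: "bool list list \<Rightarrow> bool list" where
  "enc_list [] = []"
| "enc_list (x # xs) = enc_pair x (enc_list xs)"

fun bin :: "nat \<Rightarrow> bool list" where
  "bin n = (if n = 0 then [] else odd n # bin (n div 2))"

text \<open>PT is the class of polynomial-time computable functions on bit strings.
  We only require the (true) closure properties of polynomial time: constants,
  identity, composition, pairing and projections.\<close>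

definition poly_model :: "((bool list \<Rightarrow> bool list) \<Rightarrow> bool) \<Rightarrow> bool" where
  "poly_model PT \<longleftrightarrow>
     PT id \<and> (\<forall>c. PT (\<lambda>_. c)) \<and>
     (\<forall>f g. PT f \<longrightarrow> PT g \<longrightarrow> PT (f \<circ> g)) \<and>
     (\<forall>f g. PT f \<longrightarrow> PT g \<longrightarrow> PT (\<lambda>s. enc_pair (f s) (g s))) \<and>
     PT (\<lambda>s. fst (dec_pair s)) \<and> PT (\<lambda>s. snd (dec_pair s))"

definition ptime2 :: "((bool list \<Rightarrow> bool list) \<Rightarrow> bool) \<Rightarrow>
    (bool list \<Rightarrow> bool list \<Rightarrow> bool list) \<Rightarrow> bool" where
  "ptime2 PT F \<longleftrightarrow> PT (\<lambda>s. F (fst (dec_pair s)) (snd (dec_pair s)))"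

record ssp =
  Inst :: "bool list set"
  Univ :: "bool list \<Rightarrow> bool list set"
  Sol  :: "bool list \<Rightarrow> bool list set set"

definition ssp_problem :: "ssp \<Rightarrow> bool" where
  "ssp_problem P \<longleftrightarrow>
     (\<forall>I \<in> Inst P. finite (Univ P I) \<and> Sol P I \<subseteq> Pow (Univ P I))"

definition ssp_reduction ::
  "((bool list \<Rightarrow> bool list) \<Rightarrow> bool) \<Rightarrow> ssp \<Rightarrow> ssp \<Rightarrow>
   (bool list \<Rightarrow> bool list) \<Rightarrow> (bool list \<Rightarrow> bool list \<Rightarrow> bool list) \<Rightarrow> bool" where
  "ssp_reduction PT P P' g f \<longleftrightarrow>
     PT g \<and> ptime2 PT f \<and>
     (\<forall>I \<in> Inst P.
        g I \<in> Inst P' \<and>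
        (Sol P I \<noteq> {} \<longleftrightarrow> Sol P' (g I) \<noteq> {}) \<and>
        inj_on (f I) (Univ P I) \<and> f I ` Univ P I \<subseteq> Univ P' (g I) \<and>
        {f I ` S | S. S \<in> Sol P I} = {S' \<inter> f I ` Univ P I | S'. S' \<in> Sol P' (g I)})"

definition blowup_preserving_reduction ::
  "((bool list \<Rightarrow> bool list) \<Rightarrow> bool) \<Rightarrow> ssp \<Rightarrow> ssp \<Rightarrow>
   (bool list \<Rightarrow> bool list) \<Rightarrow> (bool list \<Rightarrow> bool list \<Rightarrow> bool list) \<Rightarrow> bool" where
  "blowup_preserving_reduction PT P P' g f \<longleftrightarrow>
     ssp_reduction PT P P' g f \<and>
     (\<forall>I \<in> Inst P. \<forall>u \<in> Univ P' (g I).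
        u \<in> f I ` Univ P I \<or> (\<forall>S' \<in> Sol P' (g I). u \<notin> S') \<or> (\<forall>S' \<in> Sol P' (g I). u \<in> S'))"

definition verifiable :: "((bool list \<Rightarrow> bool list) \<Rightarrow> bool) \<Rightarrow> ssp \<Rightarrow> bool" where
  "verifiable PT P \<longleftrightarrow>
     (\<exists>v. PT v \<and> (\<forall>I \<in> Inst P. \<forall>xs. set xs \<subseteq> Univ P I \<longrightarrow>
        (v (enc_pair I (enc_list xs)) = [True] \<longleftrightarrow> set xs \<in> Sol P I)))"

text \<open>Variables are 1..n; literal (i,True) is l_i, literal (i,False) its negation.
  A formula is (n, cs) with cs a list of clauses, each a list of literals.\<close>

definition lit :: "nat \<Rightarrow> bool \<Rightarrow> bool list" where
  "lit i b = enc_pair (bin i) [b]"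

definition lits :: "nat \<Rightarrow> bool list set" where
  "lits n = {lit i b | i b. 1 \<le> i \<and> i \<le> n}"

definition clause_set :: "(nat \<times> bool) list \<Rightarrow> bool list set" where
  "clause_set c = (\<lambda>(i, b). lit i b) ` set c"

definition enc_cnf :: "nat \<Rightarrow> (nat \<times> bool) list list \<Rightarrow> bool list" where
  "enc_cnf n cs = enc_pair (bin n) (enc_list (map (\<lambda>c. enc_list (map (\<lambda>(i, b). lit i b) c)) cs))"

definition is_cnf :: "nat \<Rightarrow> (nat \<times> bool) list list \<Rightarrow> bool" where
  "is_cnf n cs \<longleftrightarrow> (\<forall>c \<in> set cs. \<forall>(i, b) \<in> set c. 1 \<le> i \<and> i \<le> n)"

definition is_3cnf :: "nat \<Rightarrow> (nat \<times> bool) list list \<Rightarrow> bool" where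
  "is_3cnf n cs \<longleftrightarrow> is_cnf n cs \<and> (\<forall>c \<in> set cs. length c = 3 \<and> distinct c)"

definition sat_problem :: "(nat \<Rightarrow> (nat \<times> bool) list list \<Rightarrow> bool) \<Rightarrow> ssp" where
  "sat_problem ok =
     \<lparr> Inst = {enc_cnf n cs | n cs. ok n cs},
       Univ = (\<lambda>I. \<Union> {lits n | n cs. I = enc_cnf n cs \<and> ok n cs}),
       Sol = (\<lambda>I. {L'. \<exists>n cs. I = enc_cnf n cs \<and> ok n cs \<and> L' \<subseteq> lits n \<and>
                    (\<forall>i. 1 \<le> i \<and> i \<le> n \<longrightarrow> card (L' \<inter> {lit i True, lit i False}) = 1) \<and>
                    (\<forall>c \<in> set cs. L' \<inter> clause_set c \<noteq> {})}) \<rparr>"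

definition Sat :: ssp where "Sat = sat_problem is_cnf"
definition Sat3 :: ssp where "Sat3 = sat_problem is_3cnf"

definition ssp_np_complete :: "((bool list \<Rightarrow> bool list) \<Rightarrow> bool) \<Rightarrow> ssp \<Rightarrow> bool" where
  "ssp_np_complete PT P \<longleftrightarrow>
     ssp_problem P \<and> verifiable PT P \<and> (\<exists>g f. ssp_reduction PT Sat P g f)"

definition distance_measure ::
  "(bool list set \<Rightarrow> bool list set \<Rightarrow> bool list set \<Rightarrow> real) \<Rightarrow> bool" where
  "distance_measure dm \<longleftrightarrow>
     (\<forall>U A1 A2. A1 \<subseteq> U \<longrightarrow> A2 \<subseteq> U \<longrightarrow> dm U A1 A2 \<ge> 0) \<and>
     (\<forall>U U' f A1 A2. inj_on f U \<longrightarrow> f ` U \<subseteq> U' \<longrightarrow> A1 \<subseteq> U \<longrightarrow> A2 \<subseteq> U \<longrightarrow>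
        dm U A1 A2 = dm U' (f ` A1) (f ` A2)) \<and>
     (\<forall>U A1 A2 x. A1 \<subseteq> U \<longrightarrow> A2 \<subseteq> U \<longrightarrow> x \<in> U \<longrightarrow> x \<notin> A1 \<union> A2 \<longrightarrow>
        dm U A1 A2 = dm U (insert x A1) (insert x A2)) \<and>
     (\<forall>U A. A \<subseteq> U \<longrightarrow> dm U A A = 0)"

definition blowup_reducible ::
  "((bool list \<Rightarrow> bool list) \<Rightarrow> bool) \<Rightarrow>
   (bool list set \<Rightarrow> bool list set \<Rightarrow> bool list set \<Rightarrow> real) \<Rightarrow> ssp \<Rightarrow> bool" where
  "blowup_reducible PT dm P' \<longleftrightarrow>
     (\<forall>I \<in> Inst Sat3. \<forall>Lb. Lb \<subseteq> Univ Sat3 I \<longrightarrow>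
        (\<forall>i. lit i True \<in> Lb \<longleftrightarrow> lit i False \<in> Lb) \<longrightarrow>
        (\<exists>g f \<beta>. ssp_reduction PT Sat3 P' g f \<and> PT (\<lambda>s. bin (\<beta> s)) \<and>
           (\<forall>S1 \<in> Sol P' (g I). \<forall>S2 \<in> Sol P' (g I).
              (f I ` Lb \<inter> S1 = f I ` Lb \<inter> S2 \<longleftrightarrow>
               dm (Univ P' (g I)) S1 S2 \<le> real (\<beta> I)))))"

end

theory Submission
  imports Defs
begin

lemma dec_enc_pair[simp]: "dec_pair (enc_pair x y) = (x, y)"
  by (induction x) (auto simp: enc_pair_def)

lemma red_facts:
  assumes r: "ssp_reduction PT P P' g f" and I: "I \<in> Inst P"
  shows "g I \<in> Inst P'" "Sol P I \<noteq> {} \<longleftrightarrow> Sol P' (g I) \<noteq> {}"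
    "inj_on (f I) (Univ P I)" "f I ` Univ P I \<subseteq> Univ P' (g I)"
    "{f I ` S | S. S \<in> Sol P I} = {S' \<inter> f I ` Univ P I | S'. S' \<in> Sol P' (g I)}"
proof -
  have A: "\<forall>I \<in> Inst P.
        g I \<in> Inst P' \<and>
        (Sol P I \<noteq> {} \<longleftrightarrow> Sol P' (g I) \<noteq> {}) \<and>
        inj_on (f I) (Univ P I) \<and> f I ` Univ P I \<subseteq> Univ P' (g I) \<and>
        {f I ` S | S. S \<in> Sol P I} = {S' \<inter> f I ` Univ P I | S'. S' \<in> Sol P' (g I)}"
    using r unfolding ssp_reduction_def by (elim conjE)
  note B = bspec[OF A I]
  show "g I \<in> Inst P'" by (rule B[THEN conjunct1])
  show "Sol P I \<noteq> {} \<longleftrightarrow> Sol P' (g I) \<noteq> {}" by (rule B[THEN conjunct2, THEN conjunct1])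
  show "inj_on (f I) (Univ P I)" by (rule B[THEN conjunct2, THEN conjunct2, THEN conjunct1])
  show "f I ` Univ P I \<subseteq> Univ P' (g I)" by (rule B[THEN conjunct2, THEN conjunct2, THEN conjunct2, THEN conjunct1])
  show "{f I ` S | S. S \<in> Sol P I} = {S' \<inter> f I ` Univ P I | S'. S' \<in> Sol P' (g I)}"
    by (rule B[THEN conjunct2, THEN conjunct2, THEN conjunct2, THEN conjunct2])
qed

lemma compose_red:
  assumes pm: "poly_model PT" and sp: "ssp_problem P"
    and r1: "ssp_reduction PT Q P g1 f1" and r2: "ssp_reduction PT P P' g2 f2"
  shows "ssp_reduction PT Q P' (g2 \<circ> g1) (\<lambda>I x. f2 (g1 I) (f1 I x))"
proof -
  have PTg: "PT (g2 \<circ> g1)"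
  proof -
    have "PT g1" "PT g2" using r1 r2 unfolding ssp_reduction_def by blast+
    then show ?thesis using pm unfolding poly_model_def by blast
  qed
  have "PT ((\<lambda>s. f2 (fst (dec_pair s)) (snd (dec_pair s))) \<circ>
        (\<lambda>s. enc_pair ((g1 \<circ> (\<lambda>s. fst (dec_pair s))) s) ((\<lambda>s. f1 (fst (dec_pair s)) (snd (dec_pair s))) s)))"
  proof -
    have a: "PT (\<lambda>s. f2 (fst (dec_pair s)) (snd (dec_pair s)))" using r2 unfolding ssp_reduction_def ptime2_def by blast
    have b: "PT (\<lambda>s. f1 (fst (dec_pair s)) (snd (dec_pair s)))" using r1 unfolding ssp_reduction_def ptime2_def by blast
    have c: "PT (g1 \<circ> (\<lambda>s. fst (dec_pair s)))"
    proof -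
      have "PT g1" using r1 unfolding ssp_reduction_def by blast
      moreover have "PT (\<lambda>s. fst (dec_pair s))" using pm unfolding poly_model_def by blast
      ultimately show ?thesis using pm unfolding poly_model_def by blast
    qed
    have comp: "\<And>f g. PT f \<Longrightarrow> PT g \<Longrightarrow> PT (f \<circ> g)"
      and pair: "\<And>f g. PT f \<Longrightarrow> PT g \<Longrightarrow> PT (\<lambda>s. enc_pair (f s) (g s))"
      using pm unfolding poly_model_def by blast+
    show ?thesis by (rule comp[OF a pair[OF c b]])
  qed
  hence PTf: "ptime2 PT (\<lambda>I x. f2 (g1 I) (f1 I x))" unfolding ptime2_def by (simp add: comp_def)
  have main: "(g2 \<circ> g1) I \<in> Inst P' \<and>
        (Sol Q I \<noteq> {} \<longleftrightarrow> Sol P' ((g2 \<circ> g1) I) \<noteq> {}) \<and>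
        inj_on (\<lambda>x. f2 (g1 I) (f1 I x)) (Univ Q I) \<and> (\<lambda>x. f2 (g1 I) (f1 I x)) ` Univ Q I \<subseteq> Univ P' ((g2 \<circ> g1) I) \<and>
        {(\<lambda>x. f2 (g1 I) (f1 I x)) ` S | S. S \<in> Sol Q I} = {S' \<inter> (\<lambda>x. f2 (g1 I) (f1 I x)) ` Univ Q I | S'. S' \<in> Sol P' ((g2 \<circ> g1) I)}"
    if I: "I \<in> Inst Q" for I
  proof -
    define J where "J = g1 I"
    define F1 where "F1 = f1 I"
    define F2 where "F2 = f2 J"
    note R1 = red_facts[OF r1 I, folded J_def F1_def]
    have J: "J \<in> Inst P" by (rule R1(1))
    have e1: "Sol Q I \<noteq> {} \<longleftrightarrow> Sol P J \<noteq> {}" by (rule R1(2))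
    have i1: "inj_on F1 (Univ Q I)" by (rule R1(3))
    have s1: "F1 ` Univ Q I \<subseteq> Univ P J" by (rule R1(4))
    have q1: "{F1 ` S | S. S \<in> Sol Q I} = {S' \<inter> F1 ` Univ Q I | S'. S' \<in> Sol P J}" by (rule R1(5))
    note R2 = red_facts[OF r2 J, folded F2_def]
    have J': "g2 J \<in> Inst P'" by (rule R2(1))
    have e2: "Sol P J \<noteq> {} \<longleftrightarrow> Sol P' (g2 J) \<noteq> {}" by (rule R2(2))
    have i2: "inj_on F2 (Univ P J)" by (rule R2(3))
    have s2: "F2 ` Univ P J \<subseteq> Univ P' (g2 J)" by (rule R2(4))
    have q2: "{F2 ` S | S. S \<in> Sol P J} = {S' \<inter> F2 ` Univ P J | S'. S' \<in> Sol P' (g2 J)}" by (rule R2(5))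
    have solsub: "\<And>T. T \<in> Sol P J \<Longrightarrow> T \<subseteq> Univ P J" using sp J unfolding ssp_problem_def by blast
    have inj: "inj_on (\<lambda>x. F2 (F1 x)) (Univ Q I)"
      using comp_inj_on[OF i1 inj_on_subset[OF i2 s1]] by (simp add: comp_def)
    have key: "F2 ` T \<inter> F2 ` F1 ` Univ Q I = F2 ` (T \<inter> F1 ` Univ Q I)" if "T \<in> Sol P J" for T
      by (rule inj_on_image_Int[OF i2 solsub[OF that] s1, symmetric])
    have im: "\<And>A. (\<lambda>x. F2 (F1 x)) ` A = F2 ` F1 ` A" by (simp add: image_image)
    have sub: "F2 ` F1 ` Univ Q I \<subseteq> F2 ` Univ P J" using s1 by (rule image_mono)
    have eq: "{(\<lambda>x. F2 (F1 x)) ` S | S. S \<in> Sol Q I} = {S' \<inter> (\<lambda>x. F2 (F1 x)) ` Univ Q I | S'. S' \<in> Sol P' (g2 J)}"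
      unfolding im
    proof (intro equalityI subsetI)
      fix X assume "X \<in> {F2 ` F1 ` S | S. S \<in> Sol Q I}"
      then obtain S where S: "S \<in> Sol Q I" "X = F2 ` F1 ` S" by blast
      have "F1 ` S \<in> {F1 ` S | S. S \<in> Sol Q I}" using S(1) by blast
      then have "F1 ` S \<in> {S' \<inter> F1 ` Univ Q I | S'. S' \<in> Sol P J}" unfolding q1 .
      then obtain T where T: "T \<in> Sol P J" "F1 ` S = T \<inter> F1 ` Univ Q I" by blast
      have "F2 ` T \<in> {F2 ` S | S. S \<in> Sol P J}" using T(1) by blast
      then have "F2 ` T \<in> {S' \<inter> F2 ` Univ P J | S'. S' \<in> Sol P' (g2 J)}" unfolding q2 .
      then obtain S' where S': "S' \<in> Sol P' (g2 J)" "F2 ` T = S' \<inter> F2 ` Univ P J" by blast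
      have "X = F2 ` (T \<inter> F1 ` Univ Q I)" using S(2) T(2) by simp
      also have "\<dots> = F2 ` T \<inter> F2 ` F1 ` Univ Q I" using key[OF T(1)] by (rule sym)
      also have "\<dots> = S' \<inter> F2 ` Univ P J \<inter> F2 ` F1 ` Univ Q I" using S'(2) by simp
      also have "\<dots> = S' \<inter> F2 ` F1 ` Univ Q I" using sub by blast
      finally show "X \<in> {S' \<inter> F2 ` F1 ` Univ Q I | S'. S' \<in> Sol P' (g2 J)}"
        using S'(1) by blast
    next
      fix X assume "X \<in> {S' \<inter> F2 ` F1 ` Univ Q I | S'. S' \<in> Sol P' (g2 J)}"
      then obtain S' where S': "S' \<in> Sol P' (g2 J)" "X = S' \<inter> F2 ` F1 ` Univ Q I" by blast
      have "S' \<inter> F2 ` Univ P J \<in> {S' \<inter> F2 ` Univ P J | S'. S' \<in> Sol P' (g2 J)}" using S'(1) by blast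
      then have "S' \<inter> F2 ` Univ P J \<in> {F2 ` S | S. S \<in> Sol P J}" unfolding q2 .
      then obtain T where T0: "T \<in> Sol P J" "S' \<inter> F2 ` Univ P J = F2 ` T" by blast
      note T = T0(1) T0(2)[symmetric]
      have "T \<inter> F1 ` Univ Q I \<in> {S' \<inter> F1 ` Univ Q I | S'. S' \<in> Sol P J}" using T(1) by blast
      then have "T \<inter> F1 ` Univ Q I \<in> {F1 ` S | S. S \<in> Sol Q I}" unfolding q1 .
      then obtain S where S0: "S \<in> Sol Q I" "T \<inter> F1 ` Univ Q I = F1 ` S" by blast
      note S = S0(1) S0(2)[symmetric]
      have "X = S' \<inter> F2 ` Univ P J \<inter> F2 ` F1 ` Univ Q I" using S'(2) sub by blast
      also have "\<dots> = F2 ` T \<inter> F2 ` F1 ` Univ Q I" using T(2) by simp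
      also have "\<dots> = F2 ` (T \<inter> F1 ` Univ Q I)" by (rule key[OF T(1)])
      also have "\<dots> = F2 ` F1 ` S" using S(2) by simp
      finally show "X \<in> {F2 ` F1 ` S | S. S \<in> Sol Q I}" using S(1) by blast
    qed
    have e: "Sol Q I \<noteq> {} \<longleftrightarrow> Sol P' (g2 J) \<noteq> {}" using e1 e2 by blast
    have s: "(\<lambda>x. F2 (F1 x)) ` Univ Q I \<subseteq> Univ P' (g2 J)" using s1 s2 by blast
    show ?thesis unfolding comp_apply J_def[symmetric] F1_def[symmetric] F2_def[symmetric]
      using J' e inj s eq by (intro conjI)
  qed
  show ?thesis unfolding ssp_reduction_def
    apply (rule conjI[OF PTg conjI[OF PTf]])
    apply (rule ballI)
    apply (erule main)
    done
qed

lemma union_inv: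
  assumes dm: "distance_measure dm"
  shows "finite C \<Longrightarrow> C \<subseteq> U \<Longrightarrow> A1 \<subseteq> U \<Longrightarrow> A2 \<subseteq> U \<Longrightarrow> C \<inter> (A1 \<union> A2) = {} \<Longrightarrow>
    dm U (A1 \<union> C) (A2 \<union> C) = dm U A1 A2"
proof (induction C rule: finite_induct)
  case empty
  then show ?case by simp
next
  case (insert x F)
  have ax: "\<And>B1 B2. B1 \<subseteq> U \<Longrightarrow> B2 \<subseteq> U \<Longrightarrow> x \<in> U \<Longrightarrow> x \<notin> B1 \<union> B2 \<Longrightarrow>
        dm U B1 B2 = dm U (insert x B1) (insert x B2)"
    using dm unfolding distance_measure_def by blast
  have "dm U (A1 \<union> insert x F) (A2 \<union> insert x F) = dm U (insert x (A1 \<union> F)) (insert x (A2 \<union> F))"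
    by simp
  also have "\<dots> = dm U (A1 \<union> F) (A2 \<union> F)"
    using insert.prems insert.hyps by (intro ax[symmetric]) auto
  also have "\<dots> = dm U A1 A2" using insert by auto
  finally show ?case .
qed

theorem theorem4:
  fixes PT :: "(bool list \<Rightarrow> bool list) \<Rightarrow> bool"
    and dm :: "bool list set \<Rightarrow> bool list set \<Rightarrow> bool list set \<Rightarrow> real"
    and P :: ssp
  assumes "poly_model PT"
    and "distance_measure dm"
    and "ssp_np_complete PT P"
    and "blowup_reducible PT dm P"
  shows "\<forall>P'. ssp_problem P' \<longrightarrow>
           (\<exists>g f. blowup_preserving_reduction PT P P' g f) \<longrightarrow>
           blowup_reducible PT dm P'"
proof (intro allI impI)
  fix P' assume sp': "ssp_problem P'" and "\<exists>g f. blowup_preserving_reduction PT P P' g f"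
  then obtain g2 f2 where bp: "blowup_preserving_reduction PT P P' g2 f2" by blast
  have r2: "ssp_reduction PT P P' g2 f2" using bp unfolding blowup_preserving_reduction_def by blast
  have sp: "ssp_problem P" using assms(3) unfolding ssp_np_complete_def by blast
  show "blowup_reducible PT dm P'"
    unfolding blowup_reducible_def
  proof (intro ballI allI impI)
    fix I Lb
    assume I: "I \<in> Inst Sat3" and Lb: "Lb \<subseteq> Univ Sat3 I" and Lbs: "\<forall>i. lit i True \<in> Lb \<longleftrightarrow> lit i False \<in> Lb"
    obtain g1 f1 \<beta> where r1: "ssp_reduction PT Sat3 P g1 f1" and pb: "PT (\<lambda>s. bin (\<beta> s))"
      and d1: "\<forall>S1 \<in> Sol P (g1 I). \<forall>S2 \<in> Sol P (g1 I).
              (f1 I ` Lb \<inter> S1 = f1 I ` Lb \<inter> S2 \<longleftrightarrow> dm (Univ P (g1 I)) S1 S2 \<le> real (\<beta> I))"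
      using assms(4)[unfolded blowup_reducible_def, rule_format, OF I Lb Lbs[rule_format]] by (elim exE conjE)
    define J where "J = g1 I"
    define F1 where "F1 = f1 I"
    define F2 where "F2 = f2 J"
    note R1 = red_facts[OF r1 I, folded J_def F1_def]
    have J: "J \<in> Inst P" by (rule R1(1))
    have i1: "inj_on F1 (Univ Sat3 I)" by (rule R1(3))
    have s1: "F1 ` Univ Sat3 I \<subseteq> Univ P J" by (rule R1(4))
    note R2 = red_facts[OF r2 J, folded F2_def]
    have J': "g2 J \<in> Inst P'" by (rule R2(1))
    have i2: "inj_on F2 (Univ P J)" by (rule R2(3))
    have s2: "F2 ` Univ P J \<subseteq> Univ P' (g2 J)" by (rule R2(4))
    have q2: "{F2 ` S | S. S \<in> Sol P J} = {S' \<inter> F2 ` Univ P J | S'. S' \<in> Sol P' (g2 J)}" by (rule R2(5))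
    have bl: "\<forall>u \<in> Univ P' (g2 J). u \<in> F2 ` Univ P J \<or> (\<forall>S' \<in> Sol P' (g2 J). u \<notin> S') \<or> (\<forall>S' \<in> Sol P' (g2 J). u \<in> S')"
      using bp J unfolding blowup_preserving_reduction_def F2_def by blast
    have solsub: "\<And>T. T \<in> Sol P J \<Longrightarrow> T \<subseteq> Univ P J" using sp J unfolding ssp_problem_def by blast
    have solsub': "\<And>T. T \<in> Sol P' (g2 J) \<Longrightarrow> T \<subseteq> Univ P' (g2 J)" and fin': "finite (Univ P' (g2 J))"
      using sp' J' unfolding ssp_problem_def by blast+
    have dmi: "\<And>A1 A2. A1 \<subseteq> Univ P J \<Longrightarrow> A2 \<subseteq> Univ P J \<Longrightarrow>
        dm (Univ P J) A1 A2 = dm (Univ P' (g2 J)) (F2 ` A1) (F2 ` A2)"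
    proof -
      fix A1 A2 assume "A1 \<subseteq> Univ P J" "A2 \<subseteq> Univ P J"
      have ax: "\<forall>U U' f A1 A2. inj_on f U \<longrightarrow> f ` U \<subseteq> U' \<longrightarrow> A1 \<subseteq> U \<longrightarrow> A2 \<subseteq> U \<longrightarrow>
        dm U A1 A2 = dm U' (f ` A1) (f ` A2)"
        using assms(2) unfolding distance_measure_def by (elim conjE)
      show "dm (Univ P J) A1 A2 = dm (Univ P' (g2 J)) (F2 ` A1) (F2 ` A2)"
        using ax[rule_format, OF i2 s2 \<open>A1 \<subseteq> Univ P J\<close> \<open>A2 \<subseteq> Univ P J\<close>] .
    qed
    have "\<forall>S1 \<in> Sol P' (g2 J). \<forall>S2 \<in> Sol P' (g2 J).
              ((\<lambda>x. F2 (F1 x)) ` Lb \<inter> S1 = (\<lambda>x. F2 (F1 x)) ` Lb \<inter> S2 \<longleftrightarrow>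
               dm (Univ P' (g2 J)) S1 S2 \<le> real (\<beta> I))"
    proof (intro ballI)
      fix S1 S2 assume S1: "S1 \<in> Sol P' (g2 J)" and S2: "S2 \<in> Sol P' (g2 J)"
      have "S1 \<inter> F2 ` Univ P J \<in> {S' \<inter> F2 ` Univ P J | S'. S' \<in> Sol P' (g2 J)}" using S1 by blast
      then have "S1 \<inter> F2 ` Univ P J \<in> {F2 ` S | S. S \<in> Sol P J}" unfolding q2 .
      then obtain T1 where T10: "T1 \<in> Sol P J" "S1 \<inter> F2 ` Univ P J = F2 ` T1" by blast
      note T1 = T10(1) T10(2)[symmetric]
      have "S2 \<inter> F2 ` Univ P J \<in> {S' \<inter> F2 ` Univ P J | S'. S' \<in> Sol P' (g2 J)}" using S2 by blast
      then have "S2 \<inter> F2 ` Univ P J \<in> {F2 ` S | S. S \<in> Sol P J}" unfolding q2 .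
      then obtain T2 where T20: "T2 \<in> Sol P J" "S2 \<inter> F2 ` Univ P J = F2 ` T2" by blast
      note T2 = T20(1) T20(2)[symmetric]
      define C where "C = S1 - F2 ` Univ P J"
      have C2: "S2 - F2 ` Univ P J = C"
        using bl S1 S2 solsub'[OF S1] solsub'[OF S2] unfolding C_def by blast
      have e1: "S1 = F2 ` T1 \<union> C" using T1 unfolding C_def by blast
      have e2: "S2 = F2 ` T2 \<union> C" using T2 C2 by blast
      have Cfin: "finite C" using fin' solsub'[OF S1] unfolding C_def
        by (meson Diff_subset finite_subset subset_trans)
      have "dm (Univ P' (g2 J)) S1 S2 = dm (Univ P' (g2 J)) (F2 ` T1) (F2 ` T2)"
        unfolding e1 e2
        apply (rule union_inv[OF assms(2) Cfin])
        using solsub'[OF S1] solsub[OF T1(1)] solsub[OF T2(1)] s2 unfolding C_def by blast+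
      also have "\<dots> = dm (Univ P J) T1 T2" by (rule dmi[OF solsub[OF T1(1)] solsub[OF T2(1)], symmetric])
      finally have dd: "dm (Univ P' (g2 J)) S1 S2 = dm (Univ P J) T1 T2" .
      have LbU: "F1 ` Lb \<subseteq> Univ P J" using Lb s1 by blast
      have k1: "(\<lambda>x. F2 (F1 x)) ` Lb \<inter> S1 = F2 ` (F1 ` Lb \<inter> T1)"
      proof -
        have "(\<lambda>x. F2 (F1 x)) ` Lb \<inter> S1 = F2 ` (F1 ` Lb) \<inter> F2 ` T1"
          using T1(2) LbU by (auto simp: image_image)
        also have "\<dots> = F2 ` (F1 ` Lb \<inter> T1)"
          by (rule inj_on_image_Int[OF i2 LbU solsub[OF T1(1)], symmetric])
        finally show ?thesis .
      qed
      have k2: "(\<lambda>x. F2 (F1 x)) ` Lb \<inter> S2 = F2 ` (F1 ` Lb \<inter> T2)"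
      proof -
        have "(\<lambda>x. F2 (F1 x)) ` Lb \<inter> S2 = F2 ` (F1 ` Lb) \<inter> F2 ` T2"
          using T2(2) LbU by (auto simp: image_image)
        also have "\<dots> = F2 ` (F1 ` Lb \<inter> T2)"
          by (rule inj_on_image_Int[OF i2 LbU solsub[OF T2(1)], symmetric])
        finally show ?thesis .
      qed
      have "F2 ` (F1 ` Lb \<inter> T1) = F2 ` (F1 ` Lb \<inter> T2) \<longleftrightarrow> F1 ` Lb \<inter> T1 = F1 ` Lb \<inter> T2"
      proof -
        have "F1 ` Lb \<inter> T1 \<subseteq> Univ P J" "F1 ` Lb \<inter> T2 \<subseteq> Univ P J" using LbU by auto
        then show ?thesis by (rule inj_on_image_eq_iff[OF i2])
      qed
      then show "(\<lambda>x. F2 (F1 x)) ` Lb \<inter> S1 = (\<lambda>x. F2 (F1 x)) ` Lb \<inter> S2 \<longleftrightarrow>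
               dm (Univ P' (g2 J)) S1 S2 \<le> real (\<beta> I)"
        unfolding k1 k2 dd using bspec[OF bspec[OF d1 T1(1)[unfolded J_def]] T2(1)[unfolded J_def]]
        unfolding J_def F1_def by simp
    qed
    then have dist: "\<forall>S1 \<in> Sol P' ((g2 \<circ> g1) I). \<forall>S2 \<in> Sol P' ((g2 \<circ> g1) I).
              ((\<lambda>I x. f2 (g1 I) (f1 I x)) I ` Lb \<inter> S1 = (\<lambda>I x. f2 (g1 I) (f1 I x)) I ` Lb \<inter> S2 \<longleftrightarrow>
               dm (Univ P' ((g2 \<circ> g1) I)) S1 S2 \<le> real (\<beta> I))"
      unfolding J_def F1_def F2_def by simp
    show "\<exists>g f \<beta>. ssp_reduction PT Sat3 P' g f \<and> PT (\<lambda>s. bin (\<beta> s)) \<and>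
           (\<forall>S1 \<in> Sol P' (g I). \<forall>S2 \<in> Sol P' (g I).
              (f I ` Lb \<inter> S1 = f I ` Lb \<inter> S2 \<longleftrightarrow>
               dm (Univ P' (g I)) S1 S2 \<le> real (\<beta> I)))"
      by (intro exI[of _ "g2 \<circ> g1"] exI[of _ "\<lambda>I x. f2 (g1 I) (f1 I x)"] exI[of _ \<beta>]
            conjI compose_red[OF assms(1) sp r1 r2] pb dist)
  qed
qed

end
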